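(* Let $(x_i)_{i\in\mathbf Z}$ be an admissible frontier which is ultimately periodic, and let $t$ be the $SL_2$-tiling with values in $\mathbf N$ extending its embedding (as in Theorem 3). Then for every point $Q\in\mathbf Z^2$ and every nonzero vector $v=(a,b)\in\mathbf Z^2$ with $ab\le0$, the ray $(t(Q+nv))_{n\in\mathbf N}$ is $\mathbf N$-rational.
   Context: Cartesian coordinates on $\mathbf Z^2$ (first coordinate to the right, second upward). An $SL_2$-tiling is $t:\mathbf Z^2\to\mathbf N$ with $t(a,b+1)t(a+1,b)-t(a,b)t(a+1,b+1)=1$ for all $(a,b)$. A frontier is a bi-infinite word over $\{x,y\}$, admissible if neither $(x_n)_{n\ge0}$ nor $(x_n)_{n\le0}$ is ultimately constant; it is embedded as lattice points $P_i$ with $P_i-P_{i-1}=(1,0)$ if $x_i=x$, $(0,1)$ if $x_i=y$, and the tiling extends it if $t(P_i)=1$ for all $i$ (such a tiling exists and is unique). The frontier is ultimately periodic if there are $p\ge1$ and $n_0,n_0'\in\mathbf Z$ with $x_n=x_{n+p}$ for $n\ge n_0$ and $x_n=x_{n-p}$ for $n\le n_0'$. A sequence $(a_n)$ over $\mathbf N$ is $\mathbf N$-rational if $a_n=\lambda M^n\gamma$ for all $n$, for some $\lambda\in\mathbf N^{1\times r}$, $M\in\mathbf N^{r\times r}$, $\gamma\in\mathbf N^{r\times1}$. *)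

theory Defs
  imports "Jordan_Normal_Form.Matrix"
begin

datatype letter = X | Y

text \<open>SL2-tiling with values in the positive integers (points of Z^2 as int pairs,
first coordinate to the right, second upward).\<close>
definition SL2_tiling :: "(int \<times> int \<Rightarrow> nat) \<Rightarrow> bool" where
  "SL2_tiling t \<longleftrightarrow> (\<forall>p. 0 < t p) \<and>
     (\<forall>a b. int (t (a, b+1)) * int (t (a+1, b)) - int (t (a, b)) * int (t (a+1, b+1)) = 1)"

definition admissible_frontier :: "(int \<Rightarrow> letter) \<Rightarrow> bool" where
  "admissible_frontier x \<longleftrightarrow>
     \<not> (\<exists>N c. \<forall>n\<ge>N. n \<ge> 0 \<longrightarrow> x n = c) \<and>
     \<not> (\<exists>N c. \<forall>n\<le>N. n \<le> 0 \<longrightarrow> x n = c)"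

definition ultimately_periodic_frontier :: "(int \<Rightarrow> letter) \<Rightarrow> bool" where
  "ultimately_periodic_frontier x \<longleftrightarrow>
     (\<exists>p::int. p \<ge> 1 \<and> (\<exists>n0 n0'. (\<forall>n\<ge>n0. x n = x (n + p)) \<and> (\<forall>n\<le>n0'. x n = x (n - p))))"

definition frontier_embedding :: "(int \<Rightarrow> letter) \<Rightarrow> (int \<Rightarrow> int \<times> int) \<Rightarrow> bool" where
  "frontier_embedding x P \<longleftrightarrow>
     (\<forall>i. P i = (if x i = X then (fst (P (i-1)) + 1, snd (P (i-1)))
                             else (fst (P (i-1)), snd (P (i-1)) + 1)))"

definition extends_frontier :: "(int \<times> int \<Rightarrow> nat) \<Rightarrow> (int \<Rightarrow> int \<times> int) \<Rightarrow> bool" where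
  "extends_frontier t P \<longleftrightarrow> (\<forall>i. t (P i) = 1)"

definition N_rational :: "(nat \<Rightarrow> nat) \<Rightarrow> bool" where
  "N_rational a \<longleftrightarrow> (\<exists>r (lam :: nat mat) (M :: nat mat) (gam :: nat mat).
     lam \<in> carrier_mat 1 r \<and> M \<in> carrier_mat r r \<and> gam \<in> carrier_mat r 1 \<and>
     (\<forall>n. a n = (lam * (M ^\<^sub>m n) * gam) $$ (0, 0)))"

end

theory Submission
  imports Defs
begin


fun mpow :: "'a set \<Rightarrow> ('a \<Rightarrow> 'a \<Rightarrow> nat) \<Rightarrow> nat \<Rightarrow> 'a \<Rightarrow> 'a \<Rightarrow> nat" where
  "mpow S M 0 i j = (if i = j then 1 else 0)"
| "mpow S M (Suc n) i j = (\<Sum>k\<in>S. mpow S M n i k * M k j)"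

definition wrat :: "'a set \<Rightarrow> ('a \<Rightarrow> nat) \<Rightarrow> ('a \<Rightarrow> 'a \<Rightarrow> nat) \<Rightarrow> ('a \<Rightarrow> nat) \<Rightarrow> nat \<Rightarrow> nat" where
  "wrat S l M g n = (\<Sum>i\<in>S. \<Sum>j\<in>S. l i * mpow S M n i j * g j)"

lemma mat_pow_entry:
  assumes "i < r" "j < r"
  shows "(mat r r (\<lambda>(i,j). M i j) ^\<^sub>m n) $$ (i,j) = mpow {..<r} M n i j"
  using assms
proof (induction n arbitrary: j)
  case 0
  then show ?case by simp
next
  case (Suc n)
  have "(mat r r (\<lambda>(i,j). M i j) ^\<^sub>m Suc n) $$ (i,j)
      = (\<Sum>k\<in>{0..<r}. (mat r r (\<lambda>(i,j). M i j) ^\<^sub>m n) $$ (i,k) * M k j)"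
    using Suc.prems by (simp add: scalar_prod_def)
  also have "\<dots> = (\<Sum>k\<in>{..<r}. mpow {..<r} M n i k * M k j)"
    using Suc by (intro sum.cong) auto
  finally show ?case by simp
qed

lemma wrat_nat_N_rational: fixes r :: nat shows "N_rational (wrat {..<r} l M g)"
proof -
  define lam :: "nat mat" where "lam = mat 1 r (\<lambda>(_,j). l j)"
  define MM :: "nat mat" where "MM = mat r r (\<lambda>(i,j). M i j)"
  define gam :: "nat mat" where "gam = mat r 1 (\<lambda>(i,_). g i)"
  have "wrat {..<r} l M g n = (lam * (MM ^\<^sub>m n) * gam) $$ (0, 0)" for n
  proof -
    have A: "(lam * (MM ^\<^sub>m n)) $$ (0,k) = (\<Sum>i<r. l i * mpow {..<r} M n i k)" if "k < r" for k
      using that by (auto simp: lam_def MM_def scalar_prod_def mat_pow_entry lessThan_atLeast0 intro!: sum.cong)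
    have "(lam * (MM ^\<^sub>m n) * gam) $$ (0, 0) = (\<Sum>k<r. (lam * (MM ^\<^sub>m n)) $$ (0,k) * g k)"
      by (auto simp: lam_def MM_def gam_def scalar_prod_def lessThan_atLeast0 intro!: sum.cong)
    also have "\<dots> = (\<Sum>k<r. (\<Sum>i<r. l i * mpow {..<r} M n i k) * g k)"
      using A by (intro sum.cong) auto
    also have "\<dots> = wrat {..<r} l M g n"
      unfolding wrat_def sum_distrib_right by (subst sum.swap) simp
    finally show ?thesis by simp
  qed
  moreover have "lam \<in> carrier_mat 1 r" "MM \<in> carrier_mat r r" "gam \<in> carrier_mat r 1"
    by (auto simp: lam_def MM_def gam_def)
  ultimately show ?thesis unfolding N_rational_def by blast
qed

lemma mpow_reindex:
  assumes "bij_betw f T S" "i \<in> T" "j \<in> T"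
  shows "mpow S M n (f i) (f j) = mpow T (\<lambda>i j. M (f i) (f j)) n i j"
  using assms(3)
proof (induction n arbitrary: j)
  case 0
  then show ?case using assms(1,2) by (auto simp: bij_betw_def inj_on_def)
next
  case (Suc n)
  have "mpow S M (Suc n) (f i) (f j) = (\<Sum>k\<in>T. mpow S M n (f i) (f k) * M (f k) (f j))"
    by (simp add: sum.reindex_bij_betw[OF assms(1), symmetric])
  also have "\<dots> = (\<Sum>k\<in>T. mpow T (\<lambda>i j. M (f i) (f j)) n i k * M (f k) (f j))"
    using Suc by (intro sum.cong) auto
  finally show ?case by simp
qed

lemma wrat_N_rational:
  assumes "finite S"
  shows "N_rational (wrat S l M g)"
proof -
  obtain f where f: "bij_betw f {0..<card S} S" using ex_bij_betw_nat_finite[OF assms] by blast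
  have f': "bij_betw f {..<card S} S" using f by (simp add: lessThan_atLeast0)
  have "wrat S l M g = wrat {..<card S} (l \<circ> f) (\<lambda>i j. M (f i) (f j)) (g \<circ> f)"
  proof
    fix n
    show "wrat S l M g n = wrat {..<card S} (l \<circ> f) (\<lambda>i j. M (f i) (f j)) (g \<circ> f) n"
      unfolding wrat_def
      by (simp add: sum.reindex_bij_betw[OF f', symmetric] mpow_reindex[OF f'])
  qed
  then show ?thesis using wrat_nat_N_rational by simp
qed

lemma N_rational_wrat:
  assumes "N_rational a"
  shows "\<exists>(r::nat) l M g. a = wrat {..<r} l M g"
proof -
  obtain r lam MM gam where c: "lam \<in> carrier_mat 1 r" "MM \<in> carrier_mat r r" "gam \<in> carrier_mat r 1"
    and a: "\<And>n. a n = (lam * (MM ^\<^sub>m n) * gam) $$ (0, 0)"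
    using assms unfolding N_rational_def by blast
  define M where "M = (\<lambda>i j. MM $$ (i,j))"
  have MM: "MM = mat r r (\<lambda>(i,j). M i j)"
    using c by (auto simp: M_def intro!: eq_matI)
  have "a n = wrat {..<r} (\<lambda>j. lam $$ (0,j)) M (\<lambda>i. gam $$ (i,0)) n" for n
  proof -
    have A: "(lam * (MM ^\<^sub>m n)) $$ (0,k) = (\<Sum>i<r. lam $$ (0,i) * mpow {..<r} M n i k)" if "k < r" for k
      using that c by (auto simp: MM scalar_prod_def mat_pow_entry lessThan_atLeast0 intro!: sum.cong)
    have "a n = (\<Sum>k<r. (lam * (MM ^\<^sub>m n)) $$ (0,k) * gam $$ (k,0))"
      using c by (auto simp: a scalar_prod_def lessThan_atLeast0 intro!: sum.cong)
    also have "\<dots> = (\<Sum>k<r. (\<Sum>i<r. lam $$ (0,i) * mpow {..<r} M n i k) * gam $$ (k,0))"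
      using A by (intro sum.cong) auto
    also have "\<dots> = wrat {..<r} (\<lambda>j. lam $$ (0,j)) M (\<lambda>i. gam $$ (i,0)) n"
      unfolding wrat_def sum_distrib_right by (subst sum.swap) simp
    finally show ?thesis .
  qed
  then have "a = wrat {..<r} (\<lambda>j. lam $$ (0,j)) M (\<lambda>i. gam $$ (i,0))" by auto
  then show ?thesis by blast
qed



lemma wrat_nat: "N_rational a \<Longrightarrow> (\<And>r l M g. a = wrat {..<(r::nat)} l M g \<Longrightarrow> P) \<Longrightarrow> P"
  using N_rational_wrat by blast

lemma mult_if10[simp]: "(x::nat) * (if P then 1 else 0) = (if P then x else 0)"
  "(if P then 1 else 0) * (x::nat) = (if P then x else 0)" by auto

lemma sum_selR: "s < (L::nat) \<Longrightarrow> (\<Sum>k<L. \<Sum>j<(r::nat). F k j * (if k = s then G j else 0)) = (\<Sum>j<r. F s j * (G j::nat))"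
proof -
  assume "s < L"
  have "(\<Sum>k<L. \<Sum>j<(r::nat). F k j * (if k = s then G j else 0)) = (\<Sum>k<L. if k = s then (\<Sum>j<r. F k j * G j) else 0)"
    by (intro sum.cong) auto
  then show ?thesis using \<open>s < L\<close> by (simp add: sum.delta')
qed

lemma sum_selL: "s < (L::nat) \<Longrightarrow> (\<Sum>k<L. \<Sum>j<(r::nat). (if k = s then G j else 0) * F k j) = (\<Sum>j<r. G j * (F s j::nat))"
proof -
  assume "s < L"
  have "(\<Sum>k<L. \<Sum>j<(r::nat). (if k = s then G j else 0) * F k j) = (\<Sum>k<L. if k = s then (\<Sum>j<r. G j * F k j) else 0)"
    by (intro sum.cong) auto
  then show ?thesis using \<open>s < L\<close> by (simp add: sum.delta')
qed

lemma prepend_N_rational: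
  assumes "N_rational b"
  shows "N_rational (\<lambda>n. if n = 0 then c else b (n - 1))"
proof -
  obtain r l M g where b: "b = wrat {..<(r::nat)} l M g" using assms by (rule wrat_nat)
  define S' where "S' = insert None (Some ` {..<r})"
  define l' where "l' = (\<lambda>i::nat option. if i = None then (1::nat) else 0)"
  define M' where "M' = (\<lambda>i j. case (i, j) of (None, Some k) \<Rightarrow> l k | (Some i, Some j) \<Rightarrow> M i j | _ \<Rightarrow> 0)"
  define g' where "g' = (\<lambda>i. case i of None \<Rightarrow> c | Some j \<Rightarrow> g j)"
  have fin: "finite S'" by (simp add: S'_def)
  have sumS: "(\<Sum>k\<in>S'. f k) = f None + (\<Sum>k<r. f (Some k))" for f :: "nat option \<Rightarrow> nat"
    by (simp add: S'_def sum.reindex)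
  have P1: "mpow S' M' n (Some i) (Some j) = mpow {..<r} M n i j \<and> mpow S' M' n (Some i) None = 0"
    if "i < r" for n i j
  proof (induction n arbitrary: j)
    case 0 then show ?case by simp
  next
    case (Suc n)
    then show ?case by (simp add: sumS M'_def)
  qed
  have P2a: "mpow S' M' n None None = (if n = 0 then 1 else 0)" for n
    by (cases n) (simp_all add: sumS M'_def)
  have P2: "mpow S' M' n None (Some j) = (if n = 0 then 0 else (\<Sum>i<r. l i * mpow {..<r} M (n - 1) i j))"
    if "j < r" for n j
    using that
  proof (induction n arbitrary: j)
    case 0 then show ?case by simp
  next
    case (Suc n)
    show ?case
    proof (cases n)
      case 0
      then show ?thesis using Suc.prems P1 by (simp add: sumS M'_def)
    next
      case (Suc m)
      have "mpow S' M' (Suc n) None (Some j) = (\<Sum>k<r. mpow S' M' n None (Some k) * M k j)"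
        by (simp add: sumS M'_def Suc)
      also have "\<dots> = (\<Sum>k<r. (\<Sum>i<r. l i * mpow {..<r} M m i k) * M k j)"
        using Suc.IH Suc by (intro sum.cong) auto
      also have "\<dots> = (\<Sum>i<r. l i * mpow {..<r} M n i j)"
        by (simp add: Suc sum_distrib_right sum_distrib_left mult.assoc) (subst sum.swap, simp)
      finally show ?thesis using Suc by simp
    qed
  qed
  have "wrat S' l' M' g' n = (if n = 0 then c else b (n - 1))" for n
  proof -
    have "wrat S' l' M' g' n = (\<Sum>j\<in>S'. mpow S' M' n None j * g' j)"
      unfolding wrat_def by (simp add: sumS l'_def)
    also have "\<dots> = (if n = 0 then 1 else 0) * c + (\<Sum>j<r. mpow S' M' n None (Some j) * g j)"
      using P2a by (simp add: sumS g'_def)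
    also have "\<dots> = (if n = 0 then c else b (n - 1))"
    proof (cases n)
      case 0 then show ?thesis using P2 by (simp add: sum.neutral)
    next
      case (Suc m)
      have "(\<Sum>j<r. mpow S' M' n None (Some j) * g j) = (\<Sum>j<r. (\<Sum>i<r. l i * mpow {..<r} M m i j) * g j)"
        using Suc by (intro sum.cong refl) (simp add: P2 del: mpow.simps)
      also have "\<dots> = b m" unfolding b wrat_def sum_distrib_right by (subst sum.swap) (simp add: mult.assoc)
      finally show ?thesis using Suc by simp
    qed
    finally show ?thesis .
  qed
  then have "(\<lambda>n. if n = 0 then c else b (n - 1)) = wrat S' l' M' g'" by auto
  then show ?thesis using wrat_N_rational[OF fin] by simp
qed

lemma eventually_N_rational:
  assumes "N_rational (\<lambda>n. a (n + K))"
  shows "N_rational a"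
  using assms
proof (induction K)
  case 0 then show ?case by simp
next
  case (Suc K)
  have "(\<lambda>n. a (n + K)) = (\<lambda>n. if n = 0 then a K else (\<lambda>n. a (n + Suc K)) (n - 1))"
    by (auto simp: fun_eq_iff)
  then have "N_rational (\<lambda>n. a (n + K))" using prepend_N_rational[OF Suc.prems] by simp
  then show ?case using Suc.IH by simp
qed

lemma zero_N_rational: "N_rational (\<lambda>n. 0)"
proof -
  have "(\<lambda>n. 0) = wrat ({}::nat set) (\<lambda>_. 0) (\<lambda>_ _. 0) (\<lambda>_. 0)" by (simp add: fun_eq_iff wrat_def)
  then show ?thesis using wrat_N_rational[of "{}::nat set" "\<lambda>_. 0" "\<lambda>_ _. 0" "\<lambda>_. 0"] by (metis finite.emptyI)
qed

lemma add_N_rational: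
  assumes "N_rational a" "N_rational b"
  shows "N_rational (\<lambda>n. a n + b n)"
proof -
  obtain r1 l1 M1 g1 where a: "a = wrat {..<(r1::nat)} l1 M1 g1" using assms(1) by (rule wrat_nat)
  obtain r2 l2 M2 g2 where b: "b = wrat {..<(r2::nat)} l2 M2 g2" using assms(2) by (rule wrat_nat)
  define S where "S = Inl ` {..<r1} \<union> Inr ` {..<r2}"
  define l where "l = case_sum l1 l2"
  define g where "g = case_sum g1 g2"
  define M where "M = (\<lambda>i j. case (i,j) of (Inl i, Inl j) \<Rightarrow> M1 i j | (Inr i, Inr j) \<Rightarrow> M2 i j | _ \<Rightarrow> 0)"
  have fin: "finite S" by (simp add: S_def)
  have sumS: "(\<Sum>k\<in>S. f k) = (\<Sum>k<r1. f (Inl k)) + (\<Sum>k<r2. f (Inr k))" for f :: "nat + nat \<Rightarrow> nat"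
    unfolding S_def by (subst sum.union_disjoint) (auto simp: sum.reindex)
  have P: "(mpow S M n (Inl i) (Inl j) = mpow {..<r1} M1 n i j \<and> mpow S M n (Inl i) (Inr j') = 0) \<and>
           (mpow S M n (Inr i') (Inr j') = mpow {..<r2} M2 n i' j' \<and> mpow S M n (Inr i') (Inl j) = 0)"
    for n i j i' j'
  proof (induction n arbitrary: j j')
    case 0 then show ?case by simp
  next
    case (Suc n) then show ?case by (simp add: sumS M_def)
  qed
  have "wrat S l M g n = a n + b n" for n
    unfolding wrat_def a b by (simp add: sumS P l_def g_def)
  then have "(\<lambda>n. a n + b n) = wrat S l M g" by auto
  then show ?thesis using wrat_N_rational[OF fin] by simp
qed

lemma sum_N_rational:
  fixes K :: nat
  assumes "\<And>s. s < K \<Longrightarrow> N_rational (f s)"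
  shows "N_rational (\<lambda>n. \<Sum>s<K. f s n)"
  using assms
proof (induction K)
  case 0 then show ?case using zero_N_rational by simp
next
  case (Suc K)
  have "N_rational (\<lambda>n. (\<Sum>s<K. f s n) + f K n)"
    using Suc by (intro add_N_rational) auto
  then show ?case by simp
qed

lemma dilate_N_rational:
  assumes "N_rational b" "s < L"
  shows "N_rational (\<lambda>n. if n mod L = s then b (n div L) else 0)"
proof -
  obtain r l M g where b: "b = wrat {..<(r::nat)} l M g" using assms(1) by (rule wrat_nat)
  define S where "S = {..<L} \<times> {..<r}"
  define l' where "l' = (\<lambda>(k::nat,i). if k = 0 then l i else 0)"
  define g' where "g' = (\<lambda>(k::nat,i). if k = s then g i else 0)"
  define M' where "M' = (\<lambda>(k::nat,i) (k'::nat,j). if Suc k < L then (if k' = Suc k \<and> i = j then 1 else 0)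
                          else (if k' = 0 then M i j else 0))"
  have fin: "finite S" by (simp add: S_def)
  have sumS: "(\<Sum>k\<in>S. f k) = (\<Sum>k<L. \<Sum>i<r. f (k,i))" for f :: "nat \<times> nat \<Rightarrow> nat"
    unfolding S_def by (simp add: sum.cartesian_product)
  have L0: "L > 0" using assms by simp
  have P: "mpow S M' n (0,i) (k,j) = (if k = n mod L then mpow {..<r} M (n div L) i j else 0)"
    if "k < L" "j < r" for n::nat and i j k
    using that
  proof (induction n arbitrary: j k)
    case 0 then show ?case using L0 by simp
  next
    case (Suc n)
    have "mpow S M' (Suc n) (0,i) (k,j) = (\<Sum>k'<L. \<Sum>j'<r. mpow S M' n (0,i) (k',j') * M' (k',j') (k,j))"
      by (simp add: sumS)
    also have "\<dots> = (\<Sum>k'<L. if k' = n mod L then (\<Sum>j'<r. mpow {..<r} M (n div L) i j' * M' (k',j') (k,j)) else 0)"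
      using Suc.IH by (intro sum.cong) auto
    also have "\<dots> = (\<Sum>j'<r. mpow {..<r} M (n div L) i j' * M' (n mod L,j') (k,j))"
      using L0 by (simp add: sum.delta')
    also have "\<dots> = (if k = Suc n mod L then mpow {..<r} M (Suc n div L) i j else 0)"
    proof (cases "Suc (n mod L) < L")
      case True
      have "Suc n mod L = Suc (n mod L)" "Suc n div L = n div L"
        using True by (simp_all add: mod_Suc div_Suc)
      have "(\<Sum>j'<r. mpow {..<r} M (n div L) i j' * M' (n mod L,j') (k,j))
           = (\<Sum>j'<r. if j' = j then (if k = Suc (n mod L) then mpow {..<r} M (n div L) i j' else 0) else 0)"
        using True by (intro sum.cong) (auto simp: M'_def)
      then show ?thesis using True Suc.prems \<open>Suc n mod L = Suc (n mod L)\<close> \<open>Suc n div L = n div L\<close>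
        by (simp add: sum.delta')
    next
      case False
      then have e: "Suc (n mod L) = L" using L0 by (metis Suc_lessI mod_less_divisor)
      have "Suc n mod L = 0" "Suc n div L = Suc (n div L)"
        using e by (simp_all add: mod_Suc div_Suc)
      then show ?thesis using False by (simp add: M'_def)
    qed
    finally show ?case .
  qed
  have "wrat S l' M' g' n = (if n mod L = s then b (n div L) else 0)" for n
  proof -
    have "wrat S l' M' g' n = (\<Sum>k<L. \<Sum>i<r. (if k = 0 then l i else 0) * (\<Sum>k'<L. \<Sum>j<r. mpow S M' n (k,i) (k',j) * (if k' = s then g j else 0)))"
      unfolding wrat_def by (simp add: sumS l'_def g'_def sum_distrib_left mult.assoc)
    also have "\<dots> = (\<Sum>k<L. \<Sum>i<r. (if k = 0 then l i else 0) * (\<Sum>j<r. mpow S M' n (k,i) (s,j) * g j))"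
      using assms(2) by (simp add: sum_selR)
    also have "\<dots> = (\<Sum>i<r. l i * (\<Sum>j<r. mpow S M' n (0,i) (s,j) * g j))"
      using L0 by (rule sum_selL)
    also have "\<dots> = (\<Sum>i<r. \<Sum>j<r. l i * mpow S M' n (0,i) (s,j) * g j)"
      by (simp add: sum_distrib_left mult.assoc)
    finally have "wrat S l' M' g' n = (\<Sum>i<r. \<Sum>j<r. l i * mpow S M' n (0,i) (s,j) * g j)" .
    also have "\<dots> = (if n mod L = s then b (n div L) else 0)"
      using assms(2) by (auto simp: P b wrat_def)
    finally show ?thesis .
  qed
  then have "(\<lambda>n. if n mod L = s then b (n div L) else 0) = wrat S l' M' g'" by auto
  then show ?thesis using wrat_N_rational[OF fin] by simp
qed

lemma interleave_N_rational:
  assumes "L > 0" "\<And>s. s < L \<Longrightarrow> N_rational (\<lambda>m. a (L * m + s))"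
  shows "N_rational a"
proof -
  have "N_rational (\<lambda>n. \<Sum>s<L. (if n mod L = s then (\<lambda>m. a (L * m + s)) (n div L) else 0))"
    using assms by (intro sum_N_rational dilate_N_rational) auto
  moreover have "(\<lambda>n. \<Sum>s<L. (if n mod L = s then (\<lambda>m. a (L * m + s)) (n div L) else 0)) = a"
  proof
    fix n
    have "(\<Sum>s<L. (if n mod L = s then a (L * (n div L) + s) else 0)) = a (L * (n div L) + n mod L)"
      using assms(1) by (simp add: sum.delta)
    then show "(\<Sum>s<L. (if n mod L = s then (\<lambda>m. a (L * m + s)) (n div L) else 0)) = a n" by simp
  qed
  ultimately show ?thesis by simp
qed



datatype 'a q2 = Q2 'a 'a 'a 'a

fun mulq :: "'a::semiring_1 q2 \<Rightarrow> 'a q2 \<Rightarrow> 'a q2" where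
  "mulq (Q2 a b c d) (Q2 e f g h) = Q2 (a*e+b*g) (a*f+b*h) (c*e+d*g) (c*f+d*h)"

definition idq :: "'a::semiring_1 q2" where "idq = Q2 1 0 0 1"

fun powq :: "'a::semiring_1 q2 \<Rightarrow> nat \<Rightarrow> 'a q2" where
  "powq A 0 = idq"
| "powq A (Suc n) = mulq (powq A n) A"

fun q11 :: "'a q2 \<Rightarrow> 'a" where "q11 (Q2 a b c d) = a"

fun qf :: "nat q2 \<Rightarrow> nat \<Rightarrow> nat \<Rightarrow> nat" where
  "qf (Q2 a b c d) i j = (if i = 0 then (if j = 0 then a else b) else (if j = 0 then c else d))"

lemma mulq_assoc: "mulq (mulq A B) C = mulq A (mulq B C)"
  by (cases A; cases B; cases C) (simp add: algebra_simps)

lemma mulq_id[simp]: "mulq idq A = A" "mulq A idq = A"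
  by (cases A; simp add: idq_def)+

lemma two_cases: "(i::nat) < 2 \<longleftrightarrow> i = 0 \<or> i = 1" by auto

lemma sum2: "(\<Sum>k<2. f k) = f 0 + f (1::nat)"
  by (simp add: numeral_2_eq_2)

lemma qf_mulq: "i < 2 \<Longrightarrow> j < 2 \<Longrightarrow> qf (mulq P A) i j = (\<Sum>k<2. qf P i k * qf A k j)"
  by (cases P; cases A) (auto simp: sum2 two_cases)

lemma qf_powq: "i < 2 \<Longrightarrow> j < 2 \<Longrightarrow> qf (powq A n) i j = mpow {..<2} (qf A) n i j"
proof (induction n arbitrary: j)
  case 0 then show ?case by (auto simp: idq_def two_cases)
next
  case (Suc n)
  have "qf (powq A (Suc n)) i j = (\<Sum>k<2. qf (powq A n) i k * qf A k j)"
    using Suc.prems by (simp add: qf_mulq)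
  also have "\<dots> = (\<Sum>k<2. mpow {..<2} (qf A) n i k * qf A k j)"
    using Suc by (intro sum.cong) auto
  finally show ?case by simp
qed

lemma sum_Times: "sum f (A \<times> B) = (\<Sum>a\<in>A. \<Sum>b\<in>B. f (a,b))"
  by (subst sum.cartesian_product) simp

lemma mpow_Suc_left:
  assumes "finite T" "i \<in> T" "j \<in> T"
  shows "mpow T M (Suc n) i j = (\<Sum>k\<in>T. M i k * mpow T M n k j)"
  using assms(2,3)
proof (induction n arbitrary: i j)
  case 0
  then show ?case using assms(1) by (simp add: sum.delta)
next
  case (Suc n)
  have "mpow T M (Suc (Suc n)) i j = (\<Sum>k\<in>T. (\<Sum>l\<in>T. M i l * mpow T M n l k) * M k j)"
    using Suc by (simp del: mpow.simps(2) add: mpow.simps(2)[of T M "Suc n"])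
  also have "\<dots> = (\<Sum>l\<in>T. M i l * (\<Sum>k\<in>T. mpow T M n l k * M k j))"
    by (simp add: sum_distrib_left sum_distrib_right mult.assoc) (rule sum.swap)
  finally show ?case by simp
qed

lemma mpow_kron:
  assumes "finite T" "i \<in> T" "i' \<in> T" "j \<in> T" "k \<in> T"
  shows "mpow (T \<times> T) (\<lambda>(u,v) (u',v'). A u u' * C v' v) n (i,i') (j,k) = mpow T A n i j * mpow T C n k i'"
  using assms(4,5)
proof (induction n arbitrary: j k)
  case 0 then show ?case by auto
next
  case (Suc n)
  have "mpow (T \<times> T) (\<lambda>(u,v) (u',v'). A u u' * C v' v) (Suc n) (i,i') (j,k)
     = (\<Sum>u\<in>T. \<Sum>v\<in>T. (mpow T A n i u * mpow T C n v i') * (A u j * C k v))"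
    using Suc by (simp add: sum_Times)
  also have "\<dots> = (\<Sum>u\<in>T. mpow T A n i u * A u j) * (\<Sum>v\<in>T. C k v * mpow T C n v i')"
    by (simp add: sum_product mult_ac)
  also have "\<dots> = mpow T A (Suc n) i j * mpow T C (Suc n) k i'"
    using mpow_Suc_left[OF assms(1) Suc.prems(2) assms(3)] by simp
  finally show ?case .
qed

lemma kron_N_rational:
  "N_rational (\<lambda>m. q11 (mulq (mulq (powq A m) B) (powq C m)))"
proof -
  define T where "T = {..<2::nat}"
  define D where "D = (\<lambda>(u,v) (u',v'). qf A u u' * qf C v' v)"
  define l where "l = (\<lambda>(u::nat,v::nat). if u = 0 \<and> v = 0 then 1 else (0::nat))"
  define g where "g = (\<lambda>(j,k). qf B j k)"
  have fin: "finite (T \<times> T)" by (simp add: T_def)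
  have sumT: "(\<Sum>x\<in>T \<times> T. f x) = f (0,0) + f (0,1) + f (1,0) + f (1,1)" for f :: "nat \<times> nat \<Rightarrow> nat"
    by (simp add: T_def sum_Times sum2)
  have q11e: "q11 X = qf X 0 0" for X by (cases X) simp
  have "wrat (T \<times> T) l D g m = q11 (mulq (mulq (powq A m) B) (powq C m))" for m
  proof -
    have "wrat (T \<times> T) l D g m = (\<Sum>x\<in>T \<times> T. mpow (T \<times> T) D m (0,0) x * g x)"
      unfolding wrat_def by (simp add: sumT l_def)
    also have "\<dots> = (\<Sum>x\<in>T \<times> T. (case x of (j,k) \<Rightarrow> mpow T (qf A) m 0 j * mpow T (qf C) m k 0 * qf B j k))"
      unfolding D_def g_def by (intro sum.cong refl) (auto simp: mpow_kron T_def)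
    also have "\<dots> = q11 (mulq (mulq (powq A m) B) (powq C m))"
      unfolding sumT by (simp add: q11e qf_mulq sum2 qf_powq[symmetric] T_def algebra_simps)
    finally show ?thesis .
  qed
  then have "(\<lambda>m. q11 (mulq (mulq (powq A m) B) (powq C m))) = wrat (T \<times> T) l D g" by auto
  then show ?thesis using wrat_N_rational[OF fin] by simp
qed



section \<open>unit-step functions\<close>

definition ustep :: "(int \<Rightarrow> int) \<Rightarrow> bool" where
  "ustep f \<longleftrightarrow> (\<forall>i. f i = f (i - 1) \<or> f i = f (i - 1) + 1)"

lemma ustep_mono_nat: "ustep f \<Longrightarrow> f i \<le> f (i + int n)"
proof (induction n)
  case 0 then show ?case by simp
next
  case (Suc n)
  have e: "i + int (Suc n) - 1 = i + int n" by simp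
  have "f (i + int (Suc n)) = f (i + int (Suc n) - 1) \<or> f (i + int (Suc n)) = f (i + int (Suc n) - 1) + 1"
    using Suc.prems unfolding ustep_def by blast
  then have "f (i + int (Suc n)) = f (i + int n) \<or> f (i + int (Suc n)) = f (i + int n) + 1"
    unfolding e .
  then show ?case using Suc by auto
qed

lemma ustep_mono: "ustep f \<Longrightarrow> i \<le> j \<Longrightarrow> f i \<le> f j"
  using ustep_mono_nat[of f i "nat (j - i)"] by simp

lemma ustep_cross_nat:
  assumes "ustep f" "f i \<le> z" "z < f (i + int n)"
  shows "\<exists>k. i \<le> k \<and> k < i + int n \<and> f k = z \<and> f (k + 1) = z + 1"
  using assms(3)
proof (induction n)
  case 0 then show ?case using assms(2) by simp
next
  case (Suc n)
  have e: "i + int (Suc n) - 1 = i + int n" by simp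
  have "f (i + int (Suc n)) = f (i + int (Suc n) - 1) \<or> f (i + int (Suc n)) = f (i + int (Suc n) - 1) + 1"
    using assms(1) unfolding ustep_def by blast
  then have st: "f (i + int (Suc n)) = f (i + int n) \<or> f (i + int (Suc n)) = f (i + int n) + 1"
    unfolding e .
  show ?case
  proof (cases "z < f (i + int n)")
    case True
    then obtain k where "i \<le> k \<and> k < i + int n \<and> f k = z \<and> f (k + 1) = z + 1" using Suc.IH by blast
    then show ?thesis by (intro exI[of _ k]) auto
  next
    case False
    then have "f (i + int n) = z" "f (i + int n + 1) = z + 1" using st Suc.prems by (auto simp: algebra_simps)
    then show ?thesis by (intro exI[of _ "i + int n"]) auto
  qed
qed

lemma ustep_cross:
  assumes "ustep f" "f i \<le> z" "z < f j"
  shows "\<exists>k. i \<le> k \<and> k < j \<and> f k = z \<and> f (k + 1) = z + 1"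
proof -
  have "i < j" using assms ustep_mono[OF assms(1), of j i] by (cases "i < j") auto
  then show ?thesis using ustep_cross_nat[OF assms(1,2), of "nat (j - i)"] assms(3) by simp
qed

lemma ustep_up:
  assumes "ustep f" "\<forall>K. \<exists>j. K \<le> f j" "f i \<le> z"
  shows "\<exists>c. i \<le> c \<and> f c = z"
proof -
  obtain j where "z + 1 \<le> f j" using assms(2) by blast
  then obtain k where "i \<le> k \<and> f k = z" using ustep_cross[OF assms(1,3), of j] by auto
  then show ?thesis by blast
qed

lemma ustep_down:
  assumes "ustep f" "\<forall>K. \<exists>j. f j \<le> K" "z \<le> f i"
  shows "\<exists>c. c \<le> i \<and> f c = z"
proof -
  obtain j where j: "f j \<le> z - 1" using assms(2) by blast
  then obtain k where "j \<le> k \<and> k < i \<and> f (k + 1) = z" using ustep_cross[OF assms(1) j, of i] assms(3) by auto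
  then show ?thesis by (intro exI[of _ "k + 1"]) auto
qed

lemma ustep_all:
  assumes "ustep f" "\<forall>K. \<exists>j. K \<le> f j" "\<forall>K. \<exists>j. f j \<le> K"
  shows "\<exists>c. f c = z"
proof (cases "f 0 \<le> z")
  case True then show ?thesis using ustep_up[OF assms(1,2) True] by blast
next
  case False then have "z \<le> f 0" by simp
  then show ?thesis using ustep_down[OF assms(1,3)] by blast
qed

section \<open>frontier basics\<close>

locale front =
  fixes x :: "int \<Rightarrow> letter" and P :: "int \<Rightarrow> int \<times> int"
  assumes adm: "admissible_frontier x" and emb: "frontier_embedding x P"
begin

lemma Pstep: "P i = (if x i = X then (fst (P (i-1)) + 1, snd (P (i-1))) else (fst (P (i-1)), snd (P (i-1)) + 1))"
  using emb unfolding frontier_embedding_def by blast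

lemma fstP: "fst (P i) = fst (P (i - 1)) + (if x i = X then 1 else 0)"
  by (subst Pstep) auto

lemma sndP: "snd (P i) = snd (P (i - 1)) + (if x i = X then 0 else 1)"
  by (subst Pstep) auto

lemma ustep_fst: "ustep (\<lambda>i. fst (P i))"
  unfolding ustep_def
proof
  fix i show "fst (P i) = fst (P (i - 1)) \<or> fst (P i) = fst (P (i - 1)) + 1"
    using fstP[of i] by (cases "x i") auto
qed

lemma ustep_snd: "ustep (\<lambda>i. snd (P i))"
  unfolding ustep_def
proof
  fix i show "snd (P i) = snd (P (i - 1)) \<or> snd (P i) = snd (P (i - 1)) + 1"
    using sndP[of i] by (cases "x i") auto
qed

lemma mono_fst: "i \<le> j \<Longrightarrow> fst (P i) \<le> fst (P j)"
  using ustep_mono[OF ustep_fst] by blast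

lemma mono_snd: "i \<le> j \<Longrightarrow> snd (P i) \<le> snd (P j)"
  using ustep_mono[OF ustep_snd] by blast

lemma not_ult_pos: "\<exists>m\<ge>N. m \<ge> 0 \<and> x m \<noteq> c"
  using adm unfolding admissible_frontier_def by blast

lemma not_ult_neg: "\<exists>m\<le>N. m \<le> 0 \<and> x m \<noteq> c"
  using adm unfolding admissible_frontier_def by blast

lemma unb_fst_up: "\<exists>j. K \<le> fst (P j)"
proof -
  have "\<exists>i. fst (P 0) + int n \<le> fst (P i)" for n
  proof (induction n)
    case 0 then show ?case by auto
  next
    case (Suc n)
    then obtain i where i: "fst (P 0) + int n \<le> fst (P i)" by blast
    obtain m where m: "m \<ge> i + 1" "x m \<noteq> Y" using not_ult_pos[of "i+1" Y] by blast
    have "fst (P m) = fst (P (m - 1)) + 1" using fstP[of m] m by (cases "x m") auto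
    moreover have "fst (P i) \<le> fst (P (m - 1))" using mono_fst m by simp
    ultimately show ?case using i by (intro exI[of _ m]) simp
  qed
  from this[of "nat (K - fst (P 0))"] obtain i where i: "fst (P 0) + int (nat (K - fst (P 0))) \<le> fst (P i)" by blast
  have "K - fst (P 0) \<le> int (nat (K - fst (P 0)))" by simp
  then show ?thesis using i by (intro exI[of _ i]) linarith
qed

lemma unb_fst_down: "\<exists>j. fst (P j) \<le> K"
proof -
  have "\<exists>i. fst (P i) \<le> fst (P 0) - int n" for n
  proof (induction n)
    case 0 then show ?case by auto
  next
    case (Suc n)
    then obtain i where i: "fst (P i) \<le> fst (P 0) - int n" by blast
    obtain m where m: "m \<le> i" "x m \<noteq> Y" using not_ult_neg[of i Y] by blast
    have "fst (P m) = fst (P (m - 1)) + 1" using fstP[of m] m by (cases "x m") auto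
    moreover have "fst (P m) \<le> fst (P i)" using mono_fst m by simp
    ultimately show ?case using i by (intro exI[of _ "m - 1"]) simp
  qed
  from this[of "nat (fst (P 0) - K)"] obtain i where i: "fst (P i) \<le> fst (P 0) - int (nat (fst (P 0) - K))" by blast
  have "fst (P 0) - K \<le> int (nat (fst (P 0) - K))" by simp
  then show ?thesis using i by (intro exI[of _ i]) linarith
qed

lemma unb_snd_up: "\<exists>j. K \<le> snd (P j)"
proof -
  have "\<exists>i. snd (P 0) + int n \<le> snd (P i)" for n
  proof (induction n)
    case 0 then show ?case by auto
  next
    case (Suc n)
    then obtain i where i: "snd (P 0) + int n \<le> snd (P i)" by blast
    obtain m where m: "m \<ge> i + 1" "x m \<noteq> X" using not_ult_pos[of "i+1" X] by blast
    have "snd (P m) = snd (P (m - 1)) + 1" using sndP[of m] m by (cases "x m") auto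
    moreover have "snd (P i) \<le> snd (P (m - 1))" using mono_snd m by simp
    ultimately show ?case using i by (intro exI[of _ m]) simp
  qed
  from this[of "nat (K - snd (P 0))"] obtain i where i: "snd (P 0) + int (nat (K - snd (P 0))) \<le> snd (P i)" by blast
  have "K - snd (P 0) \<le> int (nat (K - snd (P 0)))" by simp
  then show ?thesis using i by (intro exI[of _ i]) linarith
qed

lemma unb_snd_down: "\<exists>j. snd (P j) \<le> K"
proof -
  have "\<exists>i. snd (P i) \<le> snd (P 0) - int n" for n
  proof (induction n)
    case 0 then show ?case by auto
  next
    case (Suc n)
    then obtain i where i: "snd (P i) \<le> snd (P 0) - int n" by blast
    obtain m where m: "m \<le> i" "x m \<noteq> X" using not_ult_neg[of i X] by blast
    have "snd (P m) = snd (P (m - 1)) + 1" using sndP[of m] m by (cases "x m") auto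
    moreover have "snd (P m) \<le> snd (P i)" using mono_snd m by simp
    ultimately show ?case using i by (intro exI[of _ "m - 1"]) simp
  qed
  from this[of "nat (snd (P 0) - K)"] obtain i where i: "snd (P i) \<le> snd (P 0) - int (nat (snd (P 0) - K))" by blast
  have "snd (P 0) - K \<le> int (nat (snd (P 0) - K))" by simp
  then show ?thesis using i by (intro exI[of _ i]) linarith
qed

lemma col_up: "fst (P i) \<le> z \<Longrightarrow> \<exists>c. i \<le> c \<and> fst (P c) = z"
  using ustep_up[OF ustep_fst] unb_fst_up by blast
lemma col_down: "z \<le> fst (P i) \<Longrightarrow> \<exists>c. c \<le> i \<and> fst (P c) = z"
  using ustep_down[OF ustep_fst] unb_fst_down by blast
lemma row_up: "snd (P i) \<le> z \<Longrightarrow> \<exists>c. i \<le> c \<and> snd (P c) = z"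
  using ustep_up[OF ustep_snd] unb_snd_up by blast
lemma row_down: "z \<le> snd (P i) \<Longrightarrow> \<exists>c. c \<le> i \<and> snd (P c) = z"
  using ustep_down[OF ustep_snd] unb_snd_down by blast
lemma col_ex: "\<exists>c. fst (P c) = z"
  using ustep_all[OF ustep_fst] unb_fst_up unb_fst_down by blast
lemma row_ex: "\<exists>c. snd (P c) = z"
  using ustep_all[OF ustep_snd] unb_snd_up unb_snd_down by blast

end



fun NL :: "letter \<Rightarrow> 'a::semiring_1 q2" where
  "NL X = Q2 1 0 1 1" | "NL Y = Q2 1 1 0 1"
fun NLi :: "letter \<Rightarrow> int q2" where
  "NLi X = Q2 1 0 (-1) 1" | "NLi Y = Q2 1 (-1) 0 1"

fun Sp :: "(int \<Rightarrow> letter) \<Rightarrow> nat \<Rightarrow> int q2" where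
  "Sp x 0 = idq" | "Sp x (Suc n) = mulq (Sp x n) (NL (x (int n + 1)))"
fun Sm :: "(int \<Rightarrow> letter) \<Rightarrow> nat \<Rightarrow> int q2" where
  "Sm x 0 = idq" | "Sm x (Suc n) = mulq (Sm x n) (NLi (x (- int n)))"

definition SS :: "(int \<Rightarrow> letter) \<Rightarrow> int \<Rightarrow> int q2" where
  "SS x i = (if 0 \<le> i then Sp x (nat i) else Sm x (nat (- i)))"

fun detq :: "int q2 \<Rightarrow> int" where "detq (Q2 a b c d) = a * d - b * c"
fun q12 :: "'a q2 \<Rightarrow> 'a" where "q12 (Q2 a b c d) = b"
fun q21 :: "'a q2 \<Rightarrow> 'a" where "q21 (Q2 a b c d) = c"
fun q22 :: "'a q2 \<Rightarrow> 'a" where "q22 (Q2 a b c d) = d"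
fun mapq :: "('a \<Rightarrow> 'b) \<Rightarrow> 'a q2 \<Rightarrow> 'b q2" where "mapq f (Q2 a b c d) = Q2 (f a) (f b) (f c) (f d)"

lemma NLi_NL: "mulq (NLi l) (NL l) = idq"
  by (cases l) (simp_all add: idq_def)

lemma SS_step: "SS x i = mulq (SS x (i - 1)) (NL (x i))"
proof (cases "1 \<le> i")
  case True
  then have "nat i = Suc (nat (i - 1))" "int (nat (i - 1)) + 1 = i" by auto
  then show ?thesis using True unfolding SS_def by simp
next
  case False
  then have "nat (- (i - 1)) = Suc (nat (- i))" "- int (nat (- i)) = i" by auto
  then have "SS x (i - 1) = mulq (Sm x (nat (- i))) (NLi (x i))" using False unfolding SS_def by simp
  moreover have "SS x i = Sm x (nat (- i))" using False unfolding SS_def by (simp add: idq_def)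
  ultimately show ?thesis by (simp add: mulq_assoc NLi_NL)
qed

lemma det_mulq: "detq (mulq A B) = detq A * detq B"
  by (cases A; cases B) (simp add: algebra_simps)

lemma det_NL: "detq (NL l) = 1" "detq (NLi l) = 1"
  by (cases l; simp)+

lemma det_SS: "detq (SS x i) = 1"
proof -
  have "detq (Sp x n) = 1" for n by (induction n) (simp_all add: idq_def det_mulq det_NL)
  moreover have "detq (Sm x n) = 1" for n by (induction n) (simp_all add: idq_def det_mulq det_NL)
  ultimately show ?thesis unfolding SS_def by simp
qed

fun prodN :: "(int \<Rightarrow> letter) \<Rightarrow> int \<Rightarrow> nat \<Rightarrow> 'a::semiring_1 q2" where
  "prodN x r 0 = idq"
| "prodN x r (Suc k) = mulq (prodN x r k) (NL (x (r + int k + 1)))"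

lemma SS_prod: "SS x (r + int k) = mulq (SS x r) (prodN x r k)"
proof (induction k)
  case 0 then show ?case by simp
next
  case (Suc k)
  have e: "r + int (Suc k) = r + int k + 1" by simp
  have "SS x (r + int (Suc k)) = mulq (SS x (r + int k)) (NL (x (r + int k + 1)))"
    unfolding e using SS_step[of x "r + int k + 1"] by simp
  then show ?case using Suc by (simp add: mulq_assoc)
qed

lemma mapq_mulq: "mapq (of_nat :: nat \<Rightarrow> int) (mulq A B) = mulq (mapq of_nat A) (mapq of_nat B)"
  by (cases A; cases B) simp

lemma prodN_int: "(prodN x r k :: int q2) = mapq of_nat (prodN x r k :: nat q2)"
proof (induction k)
  case 0 then show ?case by (simp add: idq_def)
next
  case (Suc k)
  have "mapq (of_nat :: nat \<Rightarrow> int) (NL l) = NL l" for l by (cases l) simp_all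
  then show ?case using Suc by (simp add: mapq_mulq)
qed

lemma q11_mapq: "q11 (mapq f A) = f (q11 A)" by (cases A) simp

lemma prodN_split: "prodN x r (k1 + k2) = mulq (prodN x r k1) (prodN x (r + int k1) k2)"
proof (induction k2)
  case 0 then show ?case by simp
next
  case (Suc k2)
  then show ?case by (simp add: mulq_assoc algebra_simps)
qed

context front
begin

definition colidx :: "int \<Rightarrow> int" where "colidx a = (SOME i. fst (P i) = a)"
definition rowidx :: "int \<Rightarrow> int" where "rowidx b = (SOME i. snd (P i) = b)"

lemma colidx: "fst (P (colidx a)) = a"
  unfolding colidx_def using col_ex by (rule someI_ex)
lemma rowidx: "snd (P (rowidx b)) = b"
  unfolding rowidx_def using row_ex by (rule someI_ex)

definition TT :: "int \<Rightarrow> int \<Rightarrow> int" where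
  "TT a b = q11 (SS x (colidx a)) * q22 (SS x (rowidx b)) - q21 (SS x (colidx a)) * q12 (SS x (rowidx b))"

lemma col_inv_le:
  assumes "fst (P (i + int n)) = fst (P i)"
  shows "q11 (SS x (i + int n)) = q11 (SS x i) \<and> q21 (SS x (i + int n)) = q21 (SS x i)"
  using assms
proof (induction n)
  case 0 then show ?case by simp
next
  case (Suc n)
  have m1: "fst (P i) \<le> fst (P (i + int n))" "fst (P (i + int n)) \<le> fst (P (i + int (Suc n)))"
    by (auto intro: mono_fst)
  then have e: "fst (P (i + int n)) = fst (P i)" using Suc.prems by simp
  have "fst (P (i + int (Suc n))) = fst (P (i + int n)) + (if x (i + int (Suc n)) = X then 1 else 0)"
    using fstP[of "i + int (Suc n)"] by simp
  then have xy: "x (i + int (Suc n)) = Y" using Suc.prems e by (cases "x (i + int (Suc n))") auto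
  have "SS x (i + int (Suc n)) = mulq (SS x (i + int n)) (NL Y)"
    using SS_step[of x "i + int (Suc n)"] xy by simp
  then show ?case using Suc.IH[OF e] by (cases "SS x (i + int n)") simp
qed

lemma col_inv:
  assumes "fst (P i) = fst (P j)"
  shows "q11 (SS x i) = q11 (SS x j) \<and> q21 (SS x i) = q21 (SS x j)"
proof (cases "i \<le> j")
  case True
  then show ?thesis using col_inv_le[of i "nat (j - i)"] assms by simp
next
  case False
  then show ?thesis using col_inv_le[of j "nat (i - j)"] assms by simp
qed

lemma row_inv_le:
  assumes "snd (P (i + int n)) = snd (P i)"
  shows "q12 (SS x (i + int n)) = q12 (SS x i) \<and> q22 (SS x (i + int n)) = q22 (SS x i)"
  using assms
proof (induction n)
  case 0 then show ?case by simp
next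
  case (Suc n)
  have m1: "snd (P i) \<le> snd (P (i + int n))" "snd (P (i + int n)) \<le> snd (P (i + int (Suc n)))"
    by (auto intro: mono_snd)
  then have e: "snd (P (i + int n)) = snd (P i)" using Suc.prems by simp
  have "snd (P (i + int (Suc n))) = snd (P (i + int n)) + (if x (i + int (Suc n)) = X then 0 else 1)"
    using sndP[of "i + int (Suc n)"] by simp
  then have xy: "x (i + int (Suc n)) = X" using Suc.prems e by (cases "x (i + int (Suc n))") auto
  have "SS x (i + int (Suc n)) = mulq (SS x (i + int n)) (NL X)"
    using SS_step[of x "i + int (Suc n)"] xy by simp
  then show ?case using Suc.IH[OF e] by (cases "SS x (i + int n)") simp
qed

lemma row_inv:
  assumes "snd (P i) = snd (P j)"
  shows "q12 (SS x i) = q12 (SS x j) \<and> q22 (SS x i) = q22 (SS x j)"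
proof (cases "i \<le> j")
  case True
  then show ?thesis using row_inv_le[of i "nat (j - i)"] assms by simp
next
  case False
  then show ?thesis using row_inv_le[of j "nat (i - j)"] assms by simp
qed

lemma TT_eq:
  assumes "fst (P c) = a" "snd (P r) = b"
  shows "TT a b = q11 (SS x c) * q22 (SS x r) - q21 (SS x c) * q12 (SS x r)"
  using col_inv[of "colidx a" c] row_inv[of "rowidx b" r] colidx[of a] rowidx[of b] assms
  unfolding TT_def by simp

lemma TT_front: "TT (fst (P i)) (snd (P i)) = 1"
  using TT_eq[of i _ i] det_SS[of x i] by (cases "SS x i") (auto simp: algebra_simps)

lemma TT_rel: "TT a (b + 1) * TT (a + 1) b - TT a b * TT (a + 1) (b + 1) = 1"
proof -
  obtain c0 where c0: "fst (P c0) = a" using col_ex by blast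
  obtain c1 where c1: "fst (P c1) = a + 1" using col_ex by blast
  obtain k where k: "fst (P k) = a" "fst (P (k + 1)) = a + 1"
    using ustep_cross[OF ustep_fst, of c0 a c1] c0 c1 by auto
  obtain r0 where r0: "snd (P r0) = b" using row_ex by blast
  obtain r1 where r1: "snd (P r1) = b + 1" using row_ex by blast
  obtain l where l: "snd (P l) = b" "snd (P (l + 1)) = b + 1"
    using ustep_cross[OF ustep_snd, of r0 b r1] r0 r1 by auto
  have xk: "x (k + 1) = X" using fstP[of "k+1"] k by (cases "x (k+1)") auto
  have xl: "x (l + 1) = Y" using sndP[of "l+1"] l by (cases "x (l+1)") auto
  have Sk: "SS x (k + 1) = mulq (SS x k) (NL X)" using SS_step[of x "k+1"] xk by simp
  have Sl: "SS x (l + 1) = mulq (SS x l) (NL Y)" using SS_step[of x "l+1"] xl by simp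
  obtain p q u v where A: "SS x k = Q2 p q u v" by (cases "SS x k")
  obtain p' q' u' v' where B: "SS x l = Q2 p' q' u' v'" by (cases "SS x l")
  have dA: "p * v - q * u = 1" using det_SS[of x k] A by simp
  have dB: "p' * v' - q' * u' = 1" using det_SS[of x l] B by simp
  have e1: "TT a (b + 1) = p * (u' + v') - u * (p' + q')" using TT_eq[OF k(1) l(2)] Sl A B by simp
  have e2: "TT (a + 1) b = (p + q) * v' - (u + v) * q'" using TT_eq[OF k(2) l(1)] Sk A B by simp
  have e3: "TT a b = p * v' - u * q'" using TT_eq[OF k(1) l(1)] A B by simp
  have e4: "TT (a + 1) (b + 1) = (p + q) * (u' + v') - (u + v) * (p' + q')"
    using TT_eq[OF k(2) l(2)] Sk Sl A B by simp
  have "TT a (b + 1) * TT (a + 1) b - TT a b * TT (a + 1) (b + 1) = (p * v - q * u) * (p' * v' - q' * u')"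
    unfolding e1 e2 e3 e4 by (simp add: algebra_simps)
  then show ?thesis using dA dB by simp
qed

end



locale front_t = front x P for x P +
  fixes t :: "int \<times> int \<Rightarrow> nat"
  assumes til: "SL2_tiling t" and ext: "extends_frontier t P"
begin

lemma t_pos: "0 < t p" using til unfolding SL2_tiling_def by blast

lemma t_rel: "int (t (a, b+1)) * int (t (a+1, b)) - int (t (a, b)) * int (t (a+1, b+1)) = 1"
  using til unfolding SL2_tiling_def by blast

lemma t_front: "t (P i) = 1" using ext unfolding extends_frontier_def by blast

lemma region_n:
  "\<forall>a b i j. nat ((snd (P i) - b) + (a - fst (P j))) = n \<longrightarrow> fst (P i) = a \<longrightarrow> b \<le> snd (P i)
     \<longrightarrow> snd (P j) = b \<longrightarrow> fst (P j) \<le> a \<longrightarrow> int (t (a, b)) = TT a b"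
proof (induction n rule: less_induct)
  case (less n)
  show ?case
  proof (intro allI impI)
    fix a b i j
    assume n: "nat ((snd (P i) - b) + (a - fst (P j))) = n" and i: "fst (P i) = a" "b \<le> snd (P i)"
      and j: "snd (P j) = b" "fst (P j) \<le> a"
    show "int (t (a, b)) = TT a b"
    proof (cases "\<exists>l. P l = (a, b)")
      case True
      then obtain l where l: "P l = (a, b)" by blast
      then show ?thesis using t_front[of l] TT_front[of l] by simp
    next
      case False
      have ja: "fst (P j) < a" using False j by (metis le_less prod.collapse)
      have ib: "b < snd (P i)" using False i by (metis le_less prod.collapse)
      have ji: "j < i"
      proof (rule ccontr)
        assume "\<not> j < i"
        then have "fst (P i) \<le> fst (P j)" using mono_fst by simp
        then show False using ja i by simp
      qed
      obtain k where k: "j \<le> k" "k < i" "fst (P k) = a - 1" "fst (P (k + 1)) = a - 1 + 1"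
        using ustep_cross[OF ustep_fst, of j "a - 1" i] ja i by auto
      have xk: "x (k + 1) = X" using fstP[of "k+1"] k by (cases "x (k+1)") auto
      have sk: "snd (P (k + 1)) = snd (P k)" using sndP[of "k+1"] xk by simp
      have "b \<le> snd (P k)" using mono_snd[of j k] k j by simp
      moreover have "snd (P k) \<noteq> b"
      proof
        assume "snd (P k) = b"
        then have "P (k + 1) = (a, b)" using sk k by (simp add: prod_eq_iff)
        then show False using False by blast
      qed
      ultimately have kb: "b + 1 \<le> snd (P k)" by simp
      have ki: "snd (P k) \<le> snd (P i)" using mono_snd[of k i] k by simp
      obtain l where l: "j \<le> l" "l < i" "snd (P l) = b" "snd (P (l + 1)) = b + 1"
        using ustep_cross[OF ustep_snd, of j b i] ib j by auto
      have xl: "x (l + 1) = Y" using sndP[of "l+1"] l by (cases "x (l+1)") auto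
      have fl: "fst (P (l + 1)) = fst (P l)" using fstP[of "l+1"] xl by simp
      have "fst (P l) \<le> a" using mono_fst[of l i] l i by simp
      moreover have "fst (P l) \<noteq> a"
      proof
        assume "fst (P l) = a"
        then have "P l = (a, b)" using l by (simp add: prod_eq_iff)
        then show False using False by blast
      qed
      ultimately have la: "fst (P (l + 1)) \<le> a - 1" using fl by simp
      have lj: "fst (P j) \<le> fst (P (l + 1))" using mono_fst[of j "l+1"] l by simp
      have m1: "nat ((snd (P k) - b) + (a - 1 - fst (P j))) < n"
        using n k ki ja kb j by (simp add: nat_less_iff)
      have W: "int (t (a - 1, b)) = TT (a - 1) b"
        using less.IH[OF m1, rule_format, of k b "a - 1" j] k kb j ja by simp
      have m2: "nat ((snd (P i) - (b + 1)) + (a - fst (P (l + 1)))) < n"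
        using n i ib l la lj j by (simp add: nat_less_iff)
      have N: "int (t (a, b + 1)) = TT a (b + 1)"
        using less.IH[OF m2, rule_format, of i "b + 1" a "l + 1"] i ib l la by simp
      have m3: "nat ((snd (P k) - (b + 1)) + (a - 1 - fst (P (l + 1)))) < n"
        using n k ki kb l la lj j by (simp add: nat_less_iff)
      have NW: "int (t (a - 1, b + 1)) = TT (a - 1) (b + 1)"
        using less.IH[OF m3, rule_format, of k "b + 1" "a - 1" "l + 1"] k kb l la by simp
      have r1: "int (t (a - 1, b + 1)) * int (t (a, b)) - int (t (a - 1, b)) * int (t (a, b + 1)) = 1"
        using t_rel[of "a - 1" b] by simp
      have r2: "TT (a - 1) (b + 1) * TT a b - TT (a - 1) b * TT a (b + 1) = 1"
        using TT_rel[of "a - 1" b] by simp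
      have "int (t (a - 1, b + 1)) * int (t (a, b)) = int (t (a - 1, b + 1)) * TT a b"
        using r1 r2 unfolding W N NW by linarith
      moreover have "int (t (a - 1, b + 1)) \<noteq> 0" using t_pos by (simp add: gr0_conv_Suc)
      ultimately show ?thesis by simp
    qed
  qed
qed

lemma region:
  assumes "fst (P i) = a" "b \<le> snd (P i)" "snd (P j) = b" "fst (P j) \<le> a"
  shows "int (t (a, b)) = TT a b"
  using region_n assms by blast

lemma formula:
  assumes r: "snd (P r) = b" and c: "fst (P c) = a" and rc: "r \<le> c"
  shows "t (a, b) = q11 (prodN x r (nat (c - r)) :: nat q2)"
proof -
  have "int (t (a, b)) = TT a b"
    using region[OF c _ r] mono_snd[OF rc] mono_fst[OF rc] r c by simp
  also have "\<dots> = q11 (SS x c) * q22 (SS x r) - q21 (SS x c) * q12 (SS x r)"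
    using TT_eq[OF c r] .
  also have "\<dots> = q11 (prodN x r (nat (c - r)) :: int q2)"
  proof -
    have Sc: "SS x c = mulq (SS x r) (prodN x r (nat (c - r)))"
      using SS_prod[of x r "nat (c - r)"] rc by simp
    obtain p q u v where A: "SS x r = Q2 p q u v" by (cases "SS x r")
    obtain al be ga de where B: "(prodN x r (nat (c - r)) :: int q2) = Q2 al be ga de" by (cases "(prodN x r (nat (c - r)) :: int q2)")
    have d: "p * v - q * u = 1" using det_SS[of x r] A by simp
    have "q11 (SS x c) * q22 (SS x r) - q21 (SS x c) * q12 (SS x r) = al * (p * v - q * u)"
      using Sc A B by (simp add: algebra_simps)
    then show ?thesis using d B by simp
  qed
  also have "\<dots> = int (q11 (prodN x r (nat (c - r)) :: nat q2))"
    by (simp add: prodN_int q11_mapq)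
  finally show ?thesis by simp
qed

end



section \<open>periodic blocks\<close>

lemma per_pos: "(\<forall>n>r. x (n + int K) = x n) \<Longrightarrow> n > r \<Longrightarrow> x (n + int (m * K)) = (x n :: letter)"
proof (induction m)
  case 0 then show ?case by simp
next
  case (Suc m)
  have "x (n + int (Suc m * K)) = x ((n + int (m * K)) + int K)" by (simp add: algebra_simps)
  also have "\<dots> = x (n + int (m * K))"
  proof -
    have "0 \<le> int (m * K)" by simp
    then have "r < n + int (m * K)" using Suc.prems(2) by linarith
    then show ?thesis using Suc.prems(1) by blast
  qed
  finally show ?case using Suc by simp
qed

lemma per_neg: "(\<forall>n\<le>r. x (n - int K) = x n) \<Longrightarrow> n \<le> r \<Longrightarrow> x (n - int (m * K)) = (x n :: letter)"
proof (induction m)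
  case 0 then show ?case by simp
next
  case (Suc m)
  have "x (n - int (Suc m * K)) = x ((n - int (m * K)) - int K)" by (simp add: algebra_simps)
  also have "\<dots> = x (n - int (m * K))"
  proof -
    have "0 \<le> int (m * K)" by simp
    then have "n - int (m * K) \<le> r" using Suc.prems(2) by linarith
    then show ?thesis using Suc.prems(1) by blast
  qed
  finally show ?case using Suc by simp
qed

lemma prodN_cong: "(\<And>i. i < k \<Longrightarrow> x (r' + int i + 1) = x (r + int i + 1)) \<Longrightarrow> prodN x r' k = prodN x r k"
  by (induction k) auto

lemma powq_Suc_left: "mulq A (powq A m) = powq A (Suc m)"
  by (induction m) (simp_all add: mulq_assoc[symmetric])

lemma block_right:
  assumes "\<forall>n>r. x (n + int K) = x n"
  shows "prodN x r (m * K) = powq (prodN x r K) m"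
proof (induction m)
  case 0 then show ?case by simp
next
  case (Suc m)
  have "prodN x r (Suc m * K) = mulq (prodN x r (m * K)) (prodN x (r + int (m * K)) K)"
    using prodN_split[of x r "m * K" K] by (simp add: add.commute)
  also have "prodN x (r + int (m * K)) K = prodN x r K"
  proof (rule prodN_cong)
    fix i assume "i < K"
    have "x ((r + int i + 1) + int (m * K)) = x (r + int i + 1)"
      using per_pos[OF assms] by simp
    then show "x (r + int (m * K) + int i + 1) = x (r + int i + 1)" by (simp add: algebra_simps)
  qed
  finally have e: "prodN x r (Suc m * K) = mulq (prodN x r (m * K)) (prodN x r K)" .
  show ?case unfolding e Suc.IH by simp
qed

lemma block_left:
  assumes "\<forall>n\<le>r. x (n - int K) = x n"
  shows "prodN x (r - int (m * K)) (m * K) = powq (prodN x (r - int K) K) m"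
proof (induction m)
  case 0 then show ?case by simp
next
  case (Suc m)
  have "prodN x (r - int (Suc m * K)) (Suc m * K)
      = mulq (prodN x (r - int (Suc m * K)) K) (prodN x (r - int (Suc m * K) + int K) (m * K))"
    using prodN_split[of x "r - int (Suc m * K)" K "m * K"] by simp
  also have "r - int (Suc m * K) + int K = r - int (m * K)" by simp
  also have "prodN x (r - int (Suc m * K)) K = prodN x (r - int K) K"
  proof (rule prodN_cong)
    fix i assume "i < K"
    have "x ((r - int K + int i + 1) - int (m * K)) = x (r - int K + int i + 1)"
      using per_neg[OF assms] \<open>i < K\<close> by simp
    then show "x (r - int (Suc m * K) + int i + 1) = x (r - int K + int i + 1)" by (simp add: algebra_simps)
  qed
  finally have e: "prodN x (r - int (Suc m * K)) (Suc m * K) = mulq (prodN x (r - int K) K) (prodN x (r - int (m * K)) (m * K))" .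
  show ?case unfolding e Suc.IH by (simp add: powq_Suc_left del: powq.simps)
qed

lemma disp_pos:
  fixes f :: "int \<Rightarrow> int" and p :: int
  assumes f: "\<forall>i. f i = f (i - 1) + h (x i)" and per: "\<forall>n\<ge>n0. x n = x (n + p)" and i: "n0 - 1 \<le> i"
    and p: "0 \<le> p"
  shows "f (i + int m * p) = f i + int m * (f (n0 - 1 + p) - f (n0 - 1))"
proof -
  have D: "f (j + p) - f j = f (n0 - 1 + p) - f (n0 - 1)" if "n0 - 1 \<le> j" for j
    using that
  proof (induction j rule: int_ge_induct)
    case base then show ?case by simp
  next
    case (step j)
    have "f (j + 1 + p) = f (j + p) + h (x (j + 1 + p))" using f[rule_format, of "j + 1 + p"] by simp
    moreover have "f (j + 1) = f j + h (x (j + 1))" using f[rule_format, of "j + 1"] by simp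
    moreover have "x (j + 1 + p) = x (j + 1)" using per step by simp
    ultimately show ?case using step by (simp add: algebra_simps)
  qed
  show ?thesis
  proof (induction m)
    case 0 then show ?case by simp
  next
    case (Suc m)
    have "n0 - 1 \<le> i + int m * p" using i p by (simp add: add_increasing2)
    then have "f (i + int m * p + p) - f (i + int m * p) = f (n0 - 1 + p) - f (n0 - 1)"
      by (rule D)
    then show ?case using Suc by (simp add: algebra_simps)
  qed
qed

lemma disp_neg:
  fixes f :: "int \<Rightarrow> int" and p :: int
  assumes f: "\<forall>i. f i = f (i - 1) + h (x i)" and per: "\<forall>n\<le>n0'. x n = x (n - p)" and i: "i \<le> n0'"
    and p: "0 \<le> p"
  shows "f (i - int m * p) = f i - int m * (f n0' - f (n0' - p))"
proof -
  have D: "f j - f (j - p) = f n0' - f (n0' - p)" if "j \<le> n0'" for j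
    using that
  proof (induction j rule: int_le_induct)
    case base then show ?case by simp
  next
    case (step j)
    have "f j = f (j - 1) + h (x j)" using f[rule_format, of j] by simp
    moreover have "f (j - p) = f (j - 1 - p) + h (x (j - p))" using f[rule_format, of "j - p"] by (simp add: algebra_simps)
    moreover have "x j = x (j - p)" using per step by simp
    ultimately show ?case using step by (simp add: algebra_simps)
  qed
  show ?thesis
  proof (induction m)
    case 0 then show ?case by simp
  next
    case (Suc m)
    have "0 \<le> int m * p" using p by simp
    then have "i - int m * p \<le> n0'" using i by linarith
    then have "f (i - int m * p) - f (i - int m * p - p) = f n0' - f (n0' - p)"
      by (rule D)
    then show ?case using Suc by (simp add: algebra_simps)
  qed
qed



lemma ar1: "(F::int) = q + U * a \<Longrightarrow> V = U + M * (d * e) \<Longrightarrow> F + M * e * a * d = q + V * a"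
  by (simp add: algebra_simps)
lemma ar2: "(F::int) = q + U * b \<Longrightarrow> V = U + M * (d * e) \<Longrightarrow> F - - (M * d * b) * e = q + V * b"
  by (simp add: algebra_simps)

context front_t
begin

lemma ray_block:
  fixes r c :: int and Kr Kc :: nat and col row :: "nat \<Rightarrow> int"
  assumes rc: "r \<le> c" and rw: "\<forall>m. snd (P (r - int (m * Kr))) = row m"
    and cl: "\<forall>m. fst (P (c + int (m * Kc))) = col m"
    and pc: "\<forall>n>c. x (n + int Kc) = x n" and pr: "\<forall>n\<le>r. x (n - int Kr) = x n"
  shows "N_rational (\<lambda>m. t (col m, row m))"
proof -
  define d where "d = nat (c - r)"
  have cd: "c = r + int d" using rc by (simp add: d_def)
  have "t (col m, row m) = q11 (mulq (mulq (powq (prodN x (r - int Kr) Kr) m) (prodN x r d)) (powq (prodN x c Kc) m))" for m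
  proof -
    have "0 \<le> int (m * Kr)" "0 \<le> int (m * Kc)" by simp_all
    then have le: "r - int (m * Kr) \<le> c + int (m * Kc)" using rc by linarith
    have "t (col m, row m) = q11 (prodN x (r - int (m * Kr)) (nat (c + int (m * Kc) - (r - int (m * Kr)))) :: nat q2)"
      using formula[OF rw[rule_format, of m] cl[rule_format, of m] le] .
    also have "nat (c + int (m * Kc) - (r - int (m * Kr))) = m * Kr + (d + m * Kc)"
    proof -
      have "c + int (m * Kc) - (r - int (m * Kr)) = int (m * Kr + (d + m * Kc))" using cd by simp
      then show ?thesis by (simp only: nat_int)
    qed
    also have "(prodN x (r - int (m * Kr)) (m * Kr + (d + m * Kc)) :: nat q2)
        = mulq (prodN x (r - int (m * Kr)) (m * Kr)) (mulq (prodN x r d) (prodN x c (m * Kc)))"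
      by (simp add: prodN_split cd)
    also have "\<dots> = mulq (powq (prodN x (r - int Kr) Kr) m) (mulq (prodN x r d) (powq (prodN x c Kc) m))"
      by (simp only: block_left[OF pr] block_right[OF pc])
    finally show ?thesis by (simp add: mulq_assoc)
  qed
  then show ?thesis using kron_N_rational by presburger
qed

lemma ray_SE:
  fixes p n0 n0' a b q1 q2 :: int
  assumes p: "1 \<le> p" and pos: "\<forall>n\<ge>n0. x n = x (n + p)" and neg: "\<forall>n\<le>n0'. x n = x (n - p)"
    and a: "0 \<le> a" and b: "b \<le> 0" and ab: "(a, b) \<noteq> (0, 0)"
  shows "N_rational (\<lambda>n. t (q1 + int n * a, q2 + int n * b))"
proof -
  define dx where "dx = fst (P (n0 - 1 + p)) - fst (P (n0 - 1))"
  define ey where "ey = snd (P n0') - snd (P (n0' - p))"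
  have ff: "\<forall>i. fst (P i) = fst (P (i - 1)) + (\<lambda>l. if l = X then 1 else 0) (x i)"
  proof
    fix i show "fst (P i) = fst (P (i - 1)) + (\<lambda>l. if l = X then 1 else 0) (x i)" using fstP[of i] by simp
  qed
  have sf: "\<forall>i. snd (P i) = snd (P (i - 1)) + (\<lambda>l. if l = X then 0 else 1) (x i)"
  proof
    fix i show "snd (P i) = snd (P (i - 1)) + (\<lambda>l. if l = X then 0 else 1) (x i)" using sndP[of i] by simp
  qed
  have p0: "0 \<le> p" using p by simp
  have dispF: "fst (P (i + int m * p)) = fst (P i) + int m * dx" if "n0 - 1 \<le> i" for i m
    using disp_pos[OF ff pos that p0] unfolding dx_def by simp
  have dispR: "snd (P (i - int m * p)) = snd (P i) - int m * ey" if "i \<le> n0'" for i m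
    using disp_neg[OF sf neg that p0] unfolding ey_def by simp
  have mp: "int m \<le> int m * p" for m using mult_left_mono[OF p, of "int m"] by simp
  have dx1: "1 \<le> dx"
  proof (rule ccontr)
    assume "\<not> 1 \<le> dx"
    moreover have "0 \<le> dx" unfolding dx_def using mono_fst[of "n0 - 1" "n0 - 1 + p"] p by simp
    ultimately have dx0: "dx = 0" by simp
    obtain j where j: "fst (P (n0 - 1)) + 1 \<le> fst (P j)" using unb_fst_up by blast
    define m where "m = nat (j - (n0 - 1))"
    have "j - (n0 - 1) \<le> int m" unfolding m_def by simp
    then have "j \<le> n0 - 1 + int m * p" using mp[of m] by linarith
    then have "fst (P j) \<le> fst (P (n0 - 1 + int m * p))" by (rule mono_fst)
    also have "\<dots> = fst (P (n0 - 1))" using dispF[of "n0 - 1" m] dx0 by simp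
    finally show False using j by simp
  qed
  have ey1: "1 \<le> ey"
  proof (rule ccontr)
    assume "\<not> 1 \<le> ey"
    moreover have "0 \<le> ey" unfolding ey_def using mono_snd[of "n0' - p" n0'] p by simp
    ultimately have ey0: "ey = 0" by simp
    obtain j where j: "snd (P j) \<le> snd (P n0') - 1" using unb_snd_down by blast
    define m where "m = nat (n0' - j)"
    have "n0' - j \<le> int m" unfolding m_def by simp
    then have "n0' - int m * p \<le> j" using mp[of m] by linarith
    then have "snd (P (n0' - int m * p)) \<le> snd (P j)" by (rule mono_snd)
    moreover have "snd (P (n0' - int m * p)) = snd (P n0')" using dispR[of n0' m] ey0 by simp
    ultimately show False using j by simp
  qed
  define L where "L = nat dx * nat ey"
  have L0: "0 < L" using dx1 ey1 by (simp add: L_def)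
  have intL: "int L = dx * ey" using dx1 ey1 by (simp add: L_def)
  have LX: "int m0 \<le> int (L * m0 + s)" for m0 s
  proof -
    have "1 * m0 \<le> L * m0" using L0 by (intro mult_le_mono1) simp
    then have "m0 \<le> L * m0 + s" by linarith
    then show ?thesis by (simp only: of_nat_le_iff)
  qed
  have Xa: "X \<le> X * a" if "0 \<le> X" "1 \<le> a" for X :: int using mult_left_mono[OF that(2) that(1)] by simp
  have Xb: "X * b \<le> - X" if "0 \<le> X" "b \<le> -1" for X :: int using mult_left_mono[OF that(2) that(1)] by simp
  show ?thesis
  proof (rule interleave_N_rational[OF L0])
    fix s assume s: "s < L"
    define f where "f = (\<lambda>n::nat. t (q1 + int n * a, q2 + int n * b))"
    have "\<exists>m0 r c. snd (P r) = q2 + int (L * m0 + s) * b \<and> fst (P c) = q1 + int (L * m0 + s) * a \<and> r \<le> c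
                 \<and> (a = 0 \<or> n0 - 1 \<le> c) \<and> (b = 0 \<or> r \<le> n0')"
    proof (cases "a = 0")
      case True
      then have b1: "b \<le> -1" using ab b by simp
      obtain c0 where c0: "fst (P c0) = q1" using col_ex by blast
      define N where "N = min c0 n0'"
      define m0 where "m0 = nat (q2 - snd (P N))"
      have h1: "q2 - snd (P N) \<le> int m0" unfolding m0_def by simp
      have "q2 + int (L * m0 + s) * b \<le> snd (P N)"
        using Xb[OF _ b1, of "int (L * m0 + s)"] LX[of m0 s] h1 by simp
      then obtain r where r: "r \<le> N" "snd (P r) = q2 + int (L * m0 + s) * b" using row_down by blast
      show ?thesis using r c0 True by (intro exI[of _ m0] exI[of _ r] exI[of _ c0]) (auto simp: N_def)
    next
      case False
      then have a1: "1 \<le> a" using a by simp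
      show ?thesis
      proof (cases "b = 0")
        case True
        obtain r0 where r0: "snd (P r0) = q2" using row_ex by blast
        define M where "M = max r0 (n0 - 1)"
        define m0 where "m0 = nat (fst (P M) - q1)"
        have h1: "fst (P M) - q1 \<le> int m0" unfolding m0_def by simp
        have "fst (P M) \<le> q1 + int (L * m0 + s) * a"
          using Xa[OF _ a1, of "int (L * m0 + s)"] LX[of m0 s] h1 by simp
        then obtain c where c: "M \<le> c" "fst (P c) = q1 + int (L * m0 + s) * a" using col_up by blast
        show ?thesis using r0 c True by (intro exI[of _ m0] exI[of _ r0] exI[of _ c]) (auto simp: M_def)
      next
        case False
        then have b1: "b \<le> -1" using b by simp
        define M where "M = max n0' (n0 - 1)"
        define m0 where "m0 = nat (fst (P M) - q1) + nat (q2 - snd (P n0'))"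
        have h1: "fst (P M) - q1 \<le> int m0" unfolding m0_def by simp
        have h2: "q2 - snd (P n0') \<le> int m0" unfolding m0_def by simp
        have "fst (P M) \<le> q1 + int (L * m0 + s) * a"
          using Xa[OF _ a1, of "int (L * m0 + s)"] LX[of m0 s] h1 by simp
        then obtain c where c: "M \<le> c" "fst (P c) = q1 + int (L * m0 + s) * a" using col_up by blast
        have "q2 + int (L * m0 + s) * b \<le> snd (P n0')"
          using Xb[OF _ b1, of "int (L * m0 + s)"] LX[of m0 s] h2 by simp
        then obtain r where r: "r \<le> n0'" "snd (P r) = q2 + int (L * m0 + s) * b" using row_down by blast
        show ?thesis using r c by (intro exI[of _ m0] exI[of _ r] exI[of _ c]) (auto simp: M_def)
      qed
    qed
    then obtain m0 r c where ch: "snd (P r) = q2 + int (L * m0 + s) * b" "fst (P c) = q1 + int (L * m0 + s) * a"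
      "r \<le> c" "a = 0 \<or> n0 - 1 \<le> c" "b = 0 \<or> r \<le> n0'" by blast
    define Kc where "Kc = nat ey * nat a * nat p"
    define Kr where "Kr = nat dx * nat (- b) * nat p"
    define col where "col = (\<lambda>m. q1 + int (L * (m + m0) + s) * a)"
    define row where "row = (\<lambda>m. q2 + int (L * (m + m0) + s) * b)"
    have cl: "\<forall>m. fst (P (c + int (m * Kc))) = col m"
    proof
      fix m
      show "fst (P (c + int (m * Kc))) = col m"
      proof (cases "a = 0")
        case True then show ?thesis using ch by (simp add: col_def Kc_def)
      next
        case False
        then have c0: "n0 - 1 \<le> c" using ch by auto
        have e: "c + int (m * Kc) = c + int (m * nat ey * nat a) * p" using p by (simp add: Kc_def)
        have "fst (P (c + int (m * Kc))) = fst (P (c + int (m * nat ey * nat a) * p))" using e by (simp only:)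
        also have "\<dots> = fst (P c) + int (m * nat ey * nat a) * dx"
          by (rule dispF[OF c0])
        also have "\<dots> = col m"
        proof -
          have i1: "int (m * nat ey * nat a) = int m * ey * a" using a ey1 by simp
          have n: "L * (m + m0) + s = (L * m0 + s) + m * L" by (simp add: add_mult_distrib2 mult.commute[of m])
          have "int (L * (m + m0) + s) = int (L * m0 + s) + int m * int L"
            unfolding n by (simp only: of_nat_add of_nat_mult)
          then have e1: "int (L * (m + m0) + s) = int (L * m0 + s) + int m * (dx * ey)"
            unfolding intL .
          have "fst (P c) + int m * ey * a * dx = q1 + int (L * (m + m0) + s) * a" by (rule ar1[OF ch(2) e1])
          then show ?thesis by (simp only: col_def i1)
        qed
        finally show ?thesis .
      qed
    qed
    have rw: "\<forall>m. snd (P (r - int (m * Kr))) = row m"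
    proof
      fix m
      show "snd (P (r - int (m * Kr))) = row m"
      proof (cases "b = 0")
        case True then show ?thesis using ch by (simp add: row_def Kr_def)
      next
        case False
        then have r0: "r \<le> n0'" using ch by auto
        have e: "r - int (m * Kr) = r - int (m * nat dx * nat (- b)) * p" using p by (simp add: Kr_def)
        have "snd (P (r - int (m * Kr))) = snd (P (r - int (m * nat dx * nat (- b)) * p))" using e by (simp only:)
        also have "\<dots> = snd (P r) - int (m * nat dx * nat (- b)) * ey"
          by (rule dispR[OF r0])
        also have "\<dots> = row m"
        proof -
          have i1: "int (m * nat dx * nat (- b)) = - (int m * dx * b)" using b dx1 by simp
          have n: "L * (m + m0) + s = (L * m0 + s) + m * L" by (simp add: add_mult_distrib2 mult.commute[of m])
          have "int (L * (m + m0) + s) = int (L * m0 + s) + int m * int L"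
            unfolding n by (simp only: of_nat_add of_nat_mult)
          then have e1: "int (L * (m + m0) + s) = int (L * m0 + s) + int m * (dx * ey)"
            unfolding intL .
          have "snd (P r) - - (int m * dx * b) * ey = q2 + int (L * (m + m0) + s) * b" by (rule ar2[OF ch(1) e1])
          then show ?thesis by (simp only: row_def i1)
        qed
        finally show ?thesis .
      qed
    qed
    have pc: "\<forall>n>c. x (n + int Kc) = x n"
    proof (intro allI impI)
      fix n assume n: "c < n"
      show "x (n + int Kc) = x n"
      proof (cases "a = 0")
        case True then show ?thesis by (simp add: Kc_def)
      next
        case False
        then have c0: "n0 - 1 \<le> c" using ch by auto
        have h: "\<forall>n > n0 - 1. x (n + int (nat p)) = x n"
        proof (intro allI impI)
          fix n :: int assume "n > n0 - 1"
          then have "n0 \<le> n" by simp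
          then have "x n = x (n + p)" using pos by blast
          moreover have "int (nat p) = p" using p by simp
          ultimately show "x (n + int (nat p)) = x n" by simp
        qed
        have nn: "n0 - 1 < n" using n c0 by simp
        have "x (n + int ((nat ey * nat a) * nat p)) = x n"
          using per_pos[OF h nn, where m="nat ey * nat a"] .
        then show ?thesis by (simp add: Kc_def)
      qed
    qed
    have pr: "\<forall>n\<le>r. x (n - int Kr) = x n"
    proof (intro allI impI)
      fix n assume n: "n \<le> r"
      show "x (n - int Kr) = x n"
      proof (cases "b = 0")
        case True then show ?thesis by (simp add: Kr_def)
      next
        case False
        then have r0: "r \<le> n0'" using ch by auto
        have h: "\<forall>n \<le> n0'. x (n - int (nat p)) = x n"
        proof (intro allI impI)
          fix n :: int assume "n \<le> n0'"
          then have "x n = x (n - p)" using neg by blast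
          moreover have "int (nat p) = p" using p by simp
          ultimately show "x (n - int (nat p)) = x n" by simp
        qed
        have nn: "n \<le> n0'" using n r0 by simp
        have "x (n - int ((nat dx * nat (- b)) * nat p)) = x n"
          using per_neg[OF h nn, where m="nat dx * nat (- b)"] .
        then show ?thesis by (simp add: Kr_def)
      qed
    qed
    have "N_rational (\<lambda>m. t (col m, row m))" using ray_block[OF ch(3) rw cl pc pr] .
    moreover have "(\<lambda>m. t (col m, row m)) = (\<lambda>n. (\<lambda>m. t (q1 + int (L * m + s) * a, q2 + int (L * m + s) * b)) (n + m0))"
      by (simp add: col_def row_def)
    ultimately have "N_rational (\<lambda>n. (\<lambda>m. t (q1 + int (L * m + s) * a, q2 + int (L * m + s) * b)) (n + m0))"
      by (simp only:)
    then have "N_rational (\<lambda>m. t (q1 + int (L * m + s) * a, q2 + int (L * m + s) * b))"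
      by (rule eventually_N_rational)
    then show "N_rational (\<lambda>m. t (q1 + int (L * m + s) * a, q2 + int (L * m + s) * b))" .
  qed
qed

end



fun sw :: "letter \<Rightarrow> letter" where "sw X = Y" | "sw Y = X"

lemma sw_sw[simp]: "sw (sw l) = l" by (cases l) simp_all
lemma sw_eq: "sw l = c \<longleftrightarrow> l = sw c" by (cases l; cases c) simp_all

lemma SE_case:
  fixes x :: "int \<Rightarrow> letter" and P :: "int \<Rightarrow> int \<times> int" and t :: "int \<times> int \<Rightarrow> nat"
  assumes "admissible_frontier x" "ultimately_periodic_frontier x" "frontier_embedding x P"
    "SL2_tiling t" "extends_frontier t P" "0 \<le> a" "b \<le> 0" "(a, b) \<noteq> (0, 0)"
  shows "N_rational (\<lambda>n. t (q1 + int n * a, q2 + int n * b))"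
proof -
  interpret front_t x P t
    using assms by (unfold_locales) auto
  obtain p n0 n0' where "1 \<le> p" "\<forall>n\<ge>n0. x n = x (n + p)" "\<forall>n\<le>n0'. x n = x (n - p)"
    using assms(2) unfolding ultimately_periodic_frontier_def by auto
  then show ?thesis using ray_SE assms(6-8) by blast
qed

theorem corollary1:
  fixes x :: "int \<Rightarrow> letter" and P :: "int \<Rightarrow> int \<times> int" and t :: "int \<times> int \<Rightarrow> nat"
  assumes "admissible_frontier x"
    and "ultimately_periodic_frontier x"
    and "frontier_embedding x P"
    and "SL2_tiling t"
    and "extends_frontier t P"
  shows "\<forall>(Q::int \<times> int) (a::int) (b::int). (a, b) \<noteq> (0, 0) \<and> a * b \<le> 0 \<longrightarrow>
           N_rational (\<lambda>n. t (fst Q + int n * a, snd Q + int n * b))"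
proof (intro allI impI)
  fix Q :: "int \<times> int" and a b :: int
  assume ab: "(a, b) \<noteq> (0, 0) \<and> a * b \<le> 0"
  show "N_rational (\<lambda>n. t (fst Q + int n * a, snd Q + int n * b))"
  proof (cases "0 \<le> a \<and> b \<le> 0")
    case True
    then show ?thesis using SE_case[OF assms] ab by blast
  next
    case False
    then have ab2: "0 \<le> b" "a \<le> 0" using ab
      by (auto simp: mult_le_0_iff)
    define x' where "x' = (\<lambda>i. sw (x i))"
    define P' where "P' = (\<lambda>i. (snd (P i), fst (P i)))"
    define t' where "t' = (\<lambda>(u::int, v::int). t (v, u))"
    have a1: "admissible_frontier x'"
      using assms(1) unfolding admissible_frontier_def x'_def sw_eq by blast
    have a2: "ultimately_periodic_frontier x'"
      using assms(2) unfolding ultimately_periodic_frontier_def x'_def by metis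
    have a3: "frontier_embedding x' P'"
      unfolding frontier_embedding_def
    proof
      fix i
      have "P i = (if x i = X then (fst (P (i-1)) + 1, snd (P (i-1))) else (fst (P (i-1)), snd (P (i-1)) + 1))"
        using assms(3) unfolding frontier_embedding_def by blast
      then show "P' i = (if x' i = X then (fst (P' (i-1)) + 1, snd (P' (i-1))) else (fst (P' (i-1)), snd (P' (i-1)) + 1))"
        unfolding P'_def x'_def by (cases "x i") auto
    qed
    have a4: "SL2_tiling t'"
      using assms(4) unfolding SL2_tiling_def t'_def
      by (auto simp: algebra_simps)
    have a5: "extends_frontier t' P'"
      using assms(5) unfolding extends_frontier_def t'_def P'_def by simp
    have "(b, a) \<noteq> (0, 0)" using ab by auto
    then have "N_rational (\<lambda>n. t' (snd Q + int n * b, fst Q + int n * a))"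
      using SE_case[OF a1 a2 a3 a4 a5, of b a] ab2 by blast
    then show ?thesis by (simp add: t'_def)
  qed
qed


end
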